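(* Let $m\ge 1$ and consider $4m$ bits grouped into $m$ disjoint blocks of four bits each; index the bits of each block by $1,2,3,4$. Fix $\alpha\in\{2,3\}$ and set $A=\{1,\alpha\}$, $B=\{1,2,3,4\}\setminus A$. Let $(u,v)\in\{0,1\}^{4m}\times\{0,1\}^{4m}$ be random, where $u$ is the error vector and $v$ the flag vector, and suppose the distribution of $(u,v)$ is quasi-independent with strength $\{f^{(\rm in)},\delta_f^{(\rm in)},\delta_{\neg f}^{(\rm in)}\}$. For each block, with restrictions $u=(u_1,\dots,u_4)$, $v=(v_1,\dots,v_4)$ to that block, define the syndrome $s=u_1\oplus u_2\oplus u_3\oplus u_4$, the flagged set $F=\{i: v_i=1\}$, and the correction vector $c\in\{0,1\}^4$ by: $c=0$ if $s=0$; $c=e_1$ if $s=1$ and $F=\emptyset$; $c=e_{\min F}$ if $s=1$ and $F\neq\emptyset$ (here $e_i$ is the $i$-th unit vector). The block's output error bit is $U=\bigoplus_{i\in A}(u_i\oplus c_i)$ (the block has a decoding error iff $U=1$). The block's output flag bit $V$ is: $V=s$ if $|F|=0$; $V=0$ if $|F|=1$; and if $|F|\ge 2$, $V=1$ iff $F\cap A\neq\emptyset$ and $F\cap B\neq\emptyset$. Then the distribution of the $m$ pairs $(U,V)$ (one per block, i.e. the blocks viewed as $m$ bits with errors $U$ and flags $V$) is quasi-independent with strength $\{f^{(\rm out)},\delta_f^{(\rm out)},\delta_{\neg f}^{(\rm out)}\}$, where $$f^{(\rm out)}=4\delta_{\neg f}^{(\rm in)}+4\big(f^{(\rm in)}\big)^2,$$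 $$\delta_f^{(\rm out)}=2\delta_{\neg f}^{(\rm in)}+4f^{(\rm in)}\delta_f^{(\rm in)}+4\big(f^{(\rm in)}\big)^2\big(2\delta_{\neg f}^{(\rm in)}+3\delta_f^{(\rm in)}\big),$$ $$\delta_{\neg f}^{(\rm out)}=4\big(\delta_{\neg f}^{(\rm in)}\big)^2+8f^{(\rm in)}\delta_{\neg f}^{(\rm in)}.$$
   Context: Quasi-independent errors: Let $P(u,v)$ be a probability distribution on $\{0,1\}^n\times\{0,1\}^n$ for a set $\mathcal I$ of $n$ bits, where $u_i=1$ means bit $i$ has an error and $v_i=1$ means bit $i$ is flagged. $P$ is quasi-independent with strength $\{f,\delta_f,\delta_{\neg f}\}$ if for every pair of disjoint subsets $\mathcal J,\mathcal K\subseteq\mathcal I$ with $|\mathcal J|=r$, $|\mathcal K|=s$, and every subset $\mathcal L\subseteq\mathcal K$ with $|\mathcal L|=t$, the probability of the event "every bit in $\mathcal J$ is unflagged and has an error, every bit in $\mathcal K$ is flagged, and every bit in $\mathcal L$ has an error" is at most $(\delta_{\neg f})^r(\delta_f)^t f^{\,s-t}$. Interpretation: the four bits are the transversal measurement outcomes of a block of the 4-qubit code with stabilizers $\sigma_z^{\otimes4},\sigma_x^{\otimes4}$; $\alpha=3$ corresponds to decoding the logical $\sigma_z^L=\sigma_z\otimes I\otimes\sigma_z\otimes I$ and $\alpha=2$ to decoding $\sigma_x^L=\sigma_x\otimes\sigma_x\otimes I\otimes I$, and an error means the measured bit differs from the ideal one. *)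

theory Defs
  imports "HOL-Probability.Probability"
begin

text \<open>Bits are indexed by elements of type 'i; only bits in I matter.
  u i = True means bit i has an error, v i = True means bit i is flagged.\<close>
definition quasi_indep ::
  "'i set \<Rightarrow> (('i \<Rightarrow> bool) \<times> ('i \<Rightarrow> bool)) pmf \<Rightarrow> real \<Rightarrow> real \<Rightarrow> real \<Rightarrow> bool" where
  "quasi_indep I P f df dnf \<longleftrightarrow>
     (\<forall>J K L. J \<subseteq> I \<and> K \<subseteq> I \<and> J \<inter> K = {} \<and> L \<subseteq> K \<longrightarrow>
        measure_pmf.prob P
          {(u, v). (\<forall>i\<in>J. \<not> v i \<and> u i) \<and> (\<forall>i\<in>K. v i) \<and> (\<forall>i\<in>L. u i)}
        \<le> dnf ^ card J * df ^ card L * f ^ (card K - card L))"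

definition blk_syn :: "(nat \<Rightarrow> bool) \<Rightarrow> bool" where
  "blk_syn u \<longleftrightarrow> odd (card {i \<in> {1..4::nat}. u i})"

definition blk_flags :: "(nat \<Rightarrow> bool) \<Rightarrow> nat set" where
  "blk_flags v = {i \<in> {1..4::nat}. v i}"

definition blk_corr :: "(nat \<Rightarrow> bool) \<Rightarrow> (nat \<Rightarrow> bool) \<Rightarrow> nat \<Rightarrow> bool" where
  "blk_corr u v =
     (if \<not> blk_syn u then (\<lambda>_. False)
      else if blk_flags v = {} then (\<lambda>i. i = 1)
      else (\<lambda>i. i = Min (blk_flags v)))"

definition blk_U :: "nat \<Rightarrow> (nat \<Rightarrow> bool) \<Rightarrow> (nat \<Rightarrow> bool) \<Rightarrow> bool" where
  "blk_U \<alpha> u v \<longleftrightarrow> odd (card {i \<in> {1, \<alpha>}. u i \<noteq> blk_corr u v i})"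

definition blk_V :: "nat \<Rightarrow> (nat \<Rightarrow> bool) \<Rightarrow> (nat \<Rightarrow> bool) \<Rightarrow> bool" where
  "blk_V \<alpha> u v =
     (let F = blk_flags v; A = {1, \<alpha>}; B = {1..4} - {1, \<alpha>} in
      if card F = 0 then blk_syn u
      else if card F = 1 then False
      else (F \<inter> A \<noteq> {} \<and> F \<inter> B \<noteq> {}))"

text \<open>The 4m input bits are indexed by pairs (j, k): block j < m, position k in {1..4}.
  The output distribution of the m block pairs (U, V).\<close>
definition out_pmf ::
  "nat \<Rightarrow> ((nat \<times> nat \<Rightarrow> bool) \<times> (nat \<times> nat \<Rightarrow> bool)) pmf \<Rightarrow> ((nat \<Rightarrow> bool) \<times> (nat \<Rightarrow> bool)) pmf" where
  "out_pmf \<alpha> P = map_pmf (\<lambda>(u, v).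
      ((\<lambda>j. blk_U \<alpha> (\<lambda>k. u (j, k)) (\<lambda>k. v (j, k))),
       (\<lambda>j. blk_V \<alpha> (\<lambda>k. u (j, k)) (\<lambda>k. v (j, k))))) P"

end

theory Submission
  imports Defs
begin

lemma i14: "{1..4::nat} = {1,2,3,4}" by (auto simp: eval_nat_numeral)
lemma flt: "{i \<in> {1..4::nat}. u i} = (if u 1 then {1} else {}) \<union> (if u 2 then {2} else {}) \<union> (if u 3 then {3} else {}) \<union> (if u 4 then {4} else {})"
  unfolding i14 by auto
lemma syn: "blk_syn u \<longleftrightarrow> (u 1 \<noteq> (u 2 \<noteq> (u 3 \<noteq> u 4)))"
  unfolding blk_syn_def flt by (cases "u 1"; cases "u 2"; cases "u 3"; cases "u 4") auto
lemma cardF: "card (blk_flags v) = of_bool (v 1) + of_bool (v 2) + of_bool (v 3) + of_bool (v 4)"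
  unfolding blk_flags_def flt by (cases "v 1"; cases "v 2"; cases "v 3"; cases "v 4") auto
lemma emptyF: "blk_flags v = {} \<longleftrightarrow> \<not> v 1 \<and> \<not> v 2 \<and> \<not> v 3 \<and> \<not> v 4"
  unfolding blk_flags_def flt by auto
lemma minF: "blk_flags v \<noteq> {} \<Longrightarrow> Min (blk_flags v) = (if v 1 then 1 else if v 2 then 2 else if v 3 then 3 else 4)"
  unfolding blk_flags_def flt by (cases "v 1"; cases "v 2"; cases "v 3"; cases "v 4") auto
lemma corr: "blk_corr u v i \<longleftrightarrow> blk_syn u \<and> (if \<not> v 1 \<and> \<not> v 2 \<and> \<not> v 3 \<and> \<not> v 4 then i = 1
   else i = (if v 1 then 1 else if v 2 then 2 else if v 3 then 3 else 4))"
  unfolding blk_corr_def using minF[of v] emptyF[of v] by auto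
lemma fl2: "a \<noteq> b \<Longrightarrow> {i \<in> {a, b}. P i} = (if P a then {a} else {}) \<union> (if P b then {b} else {})"
  by auto
lemma U2: "blk_U 2 u v \<longleftrightarrow> ((u 1 \<noteq> blk_corr u v 1) \<noteq> (u 2 \<noteq> blk_corr u v 2))"
proof -
  have e: "{i \<in> {1,2::nat}. u i \<noteq> blk_corr u v i} = (if u 1 \<noteq> blk_corr u v 1 then {1} else {}) \<union> (if u 2 \<noteq> blk_corr u v 2 then {2} else {})" by auto
  show ?thesis unfolding blk_U_def e by (cases "u 1 \<noteq> blk_corr u v 1"; cases "u 2 \<noteq> blk_corr u v 2") auto
qed
lemma U3: "blk_U 3 u v \<longleftrightarrow> ((u 1 \<noteq> blk_corr u v 1) \<noteq> (u 3 \<noteq> blk_corr u v 3))"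
proof -
  have e: "{i \<in> {1,3::nat}. u i \<noteq> blk_corr u v i} = (if u 1 \<noteq> blk_corr u v 1 then {1} else {}) \<union> (if u 3 \<noteq> blk_corr u v 3 then {3} else {})" by auto
  show ?thesis unfolding blk_U_def e by (cases "u 1 \<noteq> blk_corr u v 1"; cases "u 3 \<noteq> blk_corr u v 3") auto
qed
lemma Fint: "blk_flags v \<inter> X = {} \<longleftrightarrow> (\<forall>i\<in>X \<inter> {1..4}. \<not> v i)"
  unfolding blk_flags_def by auto
lemma V2: "blk_V 2 u v \<longleftrightarrow> (if \<not> v 1 \<and> \<not> v 2 \<and> \<not> v 3 \<and> \<not> v 4 then blk_syn u
   else if of_bool (v 1) + of_bool (v 2) + of_bool (v 3) + of_bool (v 4) = (1::nat) then False
   else (v 1 \<or> v 2) \<and> (v 3 \<or> v 4))"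
proof -
  have a: "{1,2} \<inter> {1..4} = {1,2::nat}" "({1..4} - {1,2}) \<inter> {1..4} = {3,4::nat}" unfolding i14 by auto
  show ?thesis unfolding blk_V_def Let_def cardF Fint a by auto
qed
lemma V3: "blk_V 3 u v \<longleftrightarrow> (if \<not> v 1 \<and> \<not> v 2 \<and> \<not> v 3 \<and> \<not> v 4 then blk_syn u
   else if of_bool (v 1) + of_bool (v 2) + of_bool (v 3) + of_bool (v 4) = (1::nat) then False
   else (v 1 \<or> v 3) \<and> (v 2 \<or> v 4))"
proof -
  have a: "{1,3} \<inter> {1..4} = {1,3::nat}" "({1..4} - {1,3}) \<inter> {1..4} = {2,4::nat}" unfolding i14 by auto
  show ?thesis unfolding blk_V_def Let_def cardF Fint a by auto
qed

definition lhp :: "nat set \<times> nat set \<times> nat set \<Rightarrow> (nat \<Rightarrow> bool) \<Rightarrow> (nat \<Rightarrow> bool) \<Rightarrow> bool" where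
  "lhp p u v \<longleftrightarrow> (\<forall>i\<in>fst p. \<not> v i \<and> u i) \<and> (\<forall>i\<in>fst (snd p). v i) \<and> (\<forall>i\<in>snd (snd p). u i)"

definition FJ :: "nat \<Rightarrow> (nat set \<times> nat set \<times> nat set) list" where
  "FJ \<alpha> = (let b1 = (if \<alpha> = 2 then 3 else 2); b2 = 4 in
    [({1,b1},{},{}), ({1,b2},{},{}), ({\<alpha>,b1},{},{}), ({\<alpha>,b2},{},{}),
     ({1},{b1},{}), ({1},{b2},{}), ({\<alpha>},{b1},{}), ({\<alpha>},{b2},{}),
     ({b1},{1},{}), ({b2},{1},{}), ({b1},{\<alpha>},{}), ({b2},{\<alpha>},{})])"
definition FK :: "nat \<Rightarrow> (nat set \<times> nat set \<times> nat set) list" where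
  "FK \<alpha> = (let b1 = (if \<alpha> = 2 then 3 else 2); b2 = 4 in
    [({},{1,b1},{}), ({},{1,b2},{}), ({},{\<alpha>,b1},{}), ({},{\<alpha>,b2},{}),
     ({1},{},{}), ({2},{},{}), ({3},{},{}), ({4},{},{})])"
definition FL :: "nat \<Rightarrow> (nat set \<times> nat set \<times> nat set) list" where
  "FL \<alpha> = (if \<alpha> = 2 then
    [({3},{},{}), ({4},{},{}), ({},{1,3},{3}), ({},{2,3},{3}), ({},{1,4},{4}), ({},{2,4},{4})]
    else [({4},{},{}), ({},{3,4},{4}), ({},{1,4},{4}), ({},{2,3},{3}), ({2},{},{}), ({},{1,2},{2}), ({1},{2,3},{})])"

lemma covJ2: "\<not> blk_V 2 u v \<Longrightarrow> blk_U 2 u v \<Longrightarrow> \<exists>p\<in>set (FJ 2). lhp p u v"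
  unfolding V2 U2 corr syn FJ_def Let_def lhp_def
  by (cases "v 1"; cases "v 2"; cases "v 3"; cases "v 4"; cases "u 1"; cases "u 2"; cases "u 3"; cases "u 4") simp_all

lemma covK2: "blk_V 2 u v \<Longrightarrow> \<exists>p\<in>set (FK 2). lhp p u v"
  unfolding V2 U2 corr syn FK_def Let_def lhp_def
  by (cases "v 1"; cases "v 2"; cases "v 3"; cases "v 4"; cases "u 1"; cases "u 2"; cases "u 3"; cases "u 4") simp_all

lemma covL2: "blk_V 2 u v \<Longrightarrow> blk_U 2 u v \<Longrightarrow> \<exists>p\<in>set (FL 2). lhp p u v"
  unfolding V2 U2 corr syn FL_def Let_def lhp_def
  by (cases "v 1"; cases "v 2"; cases "v 3"; cases "v 4"; cases "u 1"; cases "u 2"; cases "u 3"; cases "u 4") simp_all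

lemma covJ3: "\<not> blk_V 3 u v \<Longrightarrow> blk_U 3 u v \<Longrightarrow> \<exists>p\<in>set (FJ 3). lhp p u v"
  unfolding V3 U3 corr syn FJ_def Let_def lhp_def
  by (cases "v 1"; cases "v 2"; cases "v 3"; cases "v 4"; cases "u 1"; cases "u 2"; cases "u 3"; cases "u 4") simp_all

lemma covK3: "blk_V 3 u v \<Longrightarrow> \<exists>p\<in>set (FK 3). lhp p u v"
  unfolding V3 U3 corr syn FK_def Let_def lhp_def
  by (cases "v 1"; cases "v 2"; cases "v 3"; cases "v 4"; cases "u 1"; cases "u 2"; cases "u 3"; cases "u 4") simp_all

lemma covL3: "blk_V 3 u v \<Longrightarrow> blk_U 3 u v \<Longrightarrow> \<exists>p\<in>set (FL 3). lhp p u v"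
  unfolding V3 U3 corr syn FL_def Let_def lhp_def
  by (cases "v 1"; cases "v 2"; cases "v 3"; cases "v 4"; cases "u 1"; cases "u 2"; cases "u 3"; cases "u 4") simp_all



definition evt :: "'i set \<Rightarrow> 'i set \<Rightarrow> 'i set \<Rightarrow> (('i \<Rightarrow> bool) \<times> ('i \<Rightarrow> bool)) set" where
  "evt J K L = {(u, v). (\<forall>i\<in>J. \<not> v i \<and> u i) \<and> (\<forall>i\<in>K. v i) \<and> (\<forall>i\<in>L. u i)}"

definition cst :: "real \<Rightarrow> real \<Rightarrow> real \<Rightarrow> 'i set \<Rightarrow> 'i set \<Rightarrow> 'i set \<Rightarrow> real" where
  "cst f df dnf J K L = dnf ^ card J * df ^ card L * f ^ (card K - card L)"

definition cstp :: "real \<Rightarrow> real \<Rightarrow> real \<Rightarrow> nat set \<times> nat set \<times> nat set \<Rightarrow> real" where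
  "cstp f df dnf p = cst f df dnf (fst p) (fst (snd p)) (snd (snd p))"

definition lev :: "nat \<Rightarrow> nat set \<times> nat set \<times> nat set \<Rightarrow> ((nat \<times> nat \<Rightarrow> bool) \<times> (nat \<times> nat \<Rightarrow> bool)) set" where
  "lev j p = evt (Pair j ` fst p) (Pair j ` fst (snd p)) (Pair j ` snd (snd p))"

lemma evt_Un: "evt (J \<union> J') (K \<union> K') (L \<union> L') = evt J K L \<inter> evt J' K' L'"
  unfolding evt_def by auto

lemma cst_union:
  fixes J0 K0 L0 :: "(nat \<times> nat) set" and a b c :: "nat set"
  assumes "finite K0" "finite J0" "finite b" "finite a" "L0 \<subseteq> K0" "c \<subseteq> b"
    and "\<forall>x\<in>J0 \<union> K0. fst x \<noteq> j"
  shows "cst f df dnf (J0 \<union> Pair j ` a) (K0 \<union> Pair j ` b) (L0 \<union> Pair j ` c)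
       = cst f df dnf J0 K0 L0 * cst f df dnf a b c"
proof -
  have fL0: "finite L0" using assms finite_subset by blast
  have fc: "finite c" using assms finite_subset by blast
  have inj: "inj_on (Pair j) X" for X :: "nat set" by (rule inj_onI) auto
  have nJ: "(j, x) \<notin> J0" "(j, x) \<notin> K0" for x using assms(7) by force+
  have d1: "J0 \<inter> Pair j ` a = {}" "K0 \<inter> Pair j ` b = {}" "L0 \<inter> Pair j ` c = {}"
    using nJ assms(5) by auto
  have cJ: "card (J0 \<union> Pair j ` a) = card J0 + card a"
    using card_Un_disjoint[OF \<open>finite J0\<close> _ d1(1)] card_image[OF inj] assms by auto
  have cK: "card (K0 \<union> Pair j ` b) = card K0 + card b"
    using card_Un_disjoint[OF \<open>finite K0\<close> _ d1(2)] card_image[OF inj] assms by auto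
  have cL: "card (L0 \<union> Pair j ` c) = card L0 + card c"
    using card_Un_disjoint[OF fL0 _ d1(3)] card_image[OF inj] fc by auto
  have le1: "card L0 \<le> card K0" using assms card_mono by blast
  have le2: "card c \<le> card b" using assms card_mono by blast
  have e: "card K0 + card b - (card L0 + card c) = (card K0 - card L0) + (card b - card c)"
    using le1 le2 by arith
  show ?thesis unfolding cst_def cJ cK cL e by (simp only: power_add mult_ac)
qed

lemma key:
  fixes P :: "((nat \<times> nat \<Rightarrow> bool) \<times> (nat \<times> nat \<Rightarrow> bool)) pmf"
    and E :: "nat \<Rightarrow> (nat set \<times> nat set \<times> nat set) list"
  assumes QI: "quasi_indep ({..<m} \<times> {1..4}) P f df dnf"
  shows "finite S \<Longrightarrow> S \<subseteq> {..<m} \<Longrightarrow>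
    (\<forall>j\<in>S. \<forall>p\<in>set (E j). fst p \<subseteq> {1..4} \<and> fst (snd p) \<subseteq> {1..4} \<and> fst p \<inter> fst (snd p) = {}
        \<and> snd (snd p) \<subseteq> fst (snd p)) \<Longrightarrow>
    J0 \<subseteq> {..<m} \<times> {1..4} \<Longrightarrow> K0 \<subseteq> {..<m} \<times> {1..4} \<Longrightarrow> J0 \<inter> K0 = {} \<Longrightarrow> L0 \<subseteq> K0 \<Longrightarrow>
    (\<forall>x\<in>J0 \<union> K0. fst x \<notin> S) \<Longrightarrow>
    measure_pmf.prob P (evt J0 K0 L0 \<inter> {w. \<forall>j\<in>S. \<exists>p\<in>set (E j). w \<in> lev j p})
      \<le> cst f df dnf J0 K0 L0 * (\<Prod>j\<in>S. sum_list (map (cstp f df dnf) (E j)))"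
proof (induction S arbitrary: J0 K0 L0 rule: finite_induct)
  case empty
  have "measure_pmf.prob P (evt J0 K0 L0) \<le> cst f df dnf J0 K0 L0"
    using QI[unfolded quasi_indep_def, rule_format, of J0 K0 L0] empty.prems
    unfolding evt_def cst_def by blast
  then show ?case by simp
next
  case (insert j S)
  note pS = insert.prems(1) and pE = insert.prems(2) and pJ = insert.prems(3) and pK = insert.prems(4)
    and pJK = insert.prems(5) and pL = insert.prems(6) and pF = insert.prems(7)
  have jm: "j < m" and Sm: "S \<subseteq> {..<m}" using pS by auto
  define R where "R = {w. \<forall>j\<in>S. \<exists>p\<in>set (E j). w \<in> lev j p}"
  define xs where "xs = E j"
  define G where "G i = evt (J0 \<union> Pair j ` fst (xs!i)) (K0 \<union> Pair j ` fst (snd (xs!i)))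
      (L0 \<union> Pair j ` snd (snd (xs!i))) \<inter> R" for i
  define Pr where "Pr = (\<Prod>j\<in>S. sum_list (map (cstp f df dnf) (E j)))"
  have fI: "finite ({..<m} \<times> {1..4::nat})" by simp
  have fJ0: "finite J0" "finite K0" using finite_subset[OF pJ fI] finite_subset[OF pK fI] .
  have sub: "evt J0 K0 L0 \<inter> {w. \<forall>j'\<in>insert j S. \<exists>p\<in>set (E j'). w \<in> lev j' p} \<subseteq> (\<Union>i\<in>{..<length xs}. G i)"
  proof
    fix w assume w: "w \<in> evt J0 K0 L0 \<inter> {w. \<forall>j'\<in>insert j S. \<exists>p\<in>set (E j'). w \<in> lev j' p}"
    then have w1: "w \<in> evt J0 K0 L0" and w2: "\<forall>j'\<in>insert j S. \<exists>p\<in>set (E j'). w \<in> lev j' p" by blast+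
    from w2 obtain p where p: "p \<in> set xs" "w \<in> lev j p" unfolding xs_def by blast
    then obtain i where i: "i < length xs" "p = xs ! i" by (metis in_set_conv_nth)
    have "w \<in> R" using w2 unfolding R_def by blast
    then have "w \<in> G i" unfolding G_def evt_Un using w1 p i unfolding lev_def by blast
    then show "w \<in> (\<Union>i\<in>{..<length xs}. G i)" using i by blast
  qed
  have "measure_pmf.prob P (evt J0 K0 L0 \<inter> {w. \<forall>j'\<in>insert j S. \<exists>p\<in>set (E j'). w \<in> lev j' p})
      \<le> measure_pmf.prob P (\<Union>i\<in>{..<length xs}. G i)"
    by (rule measure_pmf.finite_measure_mono[OF sub]) simp
  also have "\<dots> \<le> (\<Sum>i<length xs. measure_pmf.prob P (G i))"
    by (rule measure_pmf.finite_measure_subadditive_finite) auto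
  also have "\<dots> \<le> (\<Sum>i<length xs. cst f df dnf J0 K0 L0 * cstp f df dnf (xs!i) * Pr)"
  proof (rule sum_mono)
    fix i assume i: "i \<in> {..<length xs}"
    define a where "a = fst (xs!i)"
    define b where "b = fst (snd (xs!i))"
    define c where "c = snd (snd (xs!i))"
    have "xs ! i \<in> set (E j)" using i unfolding xs_def by simp
    then have pr: "a \<subseteq> {1..4}" "b \<subseteq> {1..4}" "a \<inter> b = {}" "c \<subseteq> b"
      using pE unfolding a_def b_def c_def by blast+
    have fab: "finite a" "finite b" using pr finite_subset by blast+
    have nj: "\<forall>x\<in>J0 \<union> K0. fst x \<noteq> j" using pF by blast
    have nS: "\<forall>x\<in>J0 \<union> K0. fst x \<notin> S" using pF by blast
    have nJ: "(j, x) \<notin> J0" "(j, x) \<notin> K0" for x using nj by force+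
    have "measure_pmf.prob P (G i) \<le> cst f df dnf (J0 \<union> Pair j ` a) (K0 \<union> Pair j ` b) (L0 \<union> Pair j ` c) * Pr"
      unfolding G_def R_def Pr_def a_def[symmetric] b_def[symmetric] c_def[symmetric]
    proof (rule insert.IH)
      show "S \<subseteq> {..<m}" by (rule Sm)
      show "\<forall>j\<in>S. \<forall>p\<in>set (E j). fst p \<subseteq> {1..4} \<and> fst (snd p) \<subseteq> {1..4} \<and> fst p \<inter> fst (snd p) = {} \<and> snd (snd p) \<subseteq> fst (snd p)"
        using pE by blast
      show "J0 \<union> Pair j ` a \<subseteq> {..<m} \<times> {1..4}" using pJ jm pr(1) by blast
      show "K0 \<union> Pair j ` b \<subseteq> {..<m} \<times> {1..4}" using pK jm pr(2) by blast
      show "(J0 \<union> Pair j ` a) \<inter> (K0 \<union> Pair j ` b) = {}" using pJK pr(3) nJ by blast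
      show "L0 \<union> Pair j ` c \<subseteq> K0 \<union> Pair j ` b" using pL pr(4) by blast
      show "\<forall>x\<in>J0 \<union> Pair j ` a \<union> (K0 \<union> Pair j ` b). fst x \<notin> S" using nS insert.hyps(2) by auto
    qed
    also have "\<dots> = cst f df dnf J0 K0 L0 * cstp f df dnf (xs!i) * Pr"
      unfolding cstp_def a_def[symmetric] b_def[symmetric] c_def[symmetric]
      by (subst cst_union[OF fJ0(2) fJ0(1) fab(2) fab(1) pL pr(4) nj]) (rule refl)
    finally show "measure_pmf.prob P (G i) \<le> cst f df dnf J0 K0 L0 * cstp f df dnf (xs!i) * Pr" .
  qed
  also have "\<dots> = cst f df dnf J0 K0 L0 * (\<Prod>j\<in>insert j S. sum_list (map (cstp f df dnf) (E j)))"
  proof -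
    have "sum_list (map (cstp f df dnf) xs) = (\<Sum>i<length xs. cstp f df dnf (xs!i))"
      by (simp add: sum_list_sum_nth atLeast0LessThan)
    then show ?thesis using insert.hyps unfolding Pr_def xs_def
      by (simp add: sum_distrib_left sum_distrib_right mult_ac)
  qed
  finally show ?case .
qed

lemma lev_iff: "(u, v) \<in> lev j p \<longleftrightarrow> lhp p (\<lambda>k. u (j, k)) (\<lambda>k. v (j, k))"
  unfolding lev_def evt_def lhp_def by auto

lemma fam_ok: "\<alpha> \<in> {2,3} \<Longrightarrow> p \<in> set (FJ \<alpha>) \<union> set (FK \<alpha>) \<union> set (FL \<alpha>) \<Longrightarrow>
   fst p \<subseteq> {1..4} \<and> fst (snd p) \<subseteq> {1..4} \<and> fst p \<inter> fst (snd p) = {} \<and> snd (snd p) \<subseteq> fst (snd p)"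
  unfolding FJ_def FK_def FL_def Let_def i14 by auto

lemma sumJ: "\<alpha> \<in> {2,3} \<Longrightarrow> sum_list (map (cstp f df dnf) (FJ \<alpha>)) = 4 * dnf ^ 2 + 8 * f * dnf"
  unfolding FJ_def Let_def cstp_def cst_def by (auto simp: power2_eq_square)
lemma sumK: "\<alpha> \<in> {2,3} \<Longrightarrow> sum_list (map (cstp f df dnf) (FK \<alpha>)) = 4 * dnf + 4 * f ^ 2"
  unfolding FK_def Let_def cstp_def cst_def by (auto simp: power2_eq_square)
lemma sumL: "\<alpha> \<in> {2,3} \<Longrightarrow> 0 \<le> f \<Longrightarrow> 0 \<le> df \<Longrightarrow> 0 \<le> dnf \<Longrightarrow>
   sum_list (map (cstp f df dnf) (FL \<alpha>)) \<le> 2 * dnf + 4 * f * df + 4 * f ^ 2 * (2 * dnf + 3 * df)"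
proof -
  assume a: "\<alpha> \<in> {2,3}" "0 \<le> f" "0 \<le> df" "0 \<le> dnf"
  have "0 \<le> f * f * dnf" "0 \<le> f * f * df" using a by simp_all
  then show ?thesis using a unfolding FL_def Let_def cstp_def cst_def by (auto simp: power2_eq_square algebra_simps)
qed

lemma sum_nonneg_fam: "0 \<le> f \<Longrightarrow> 0 \<le> df \<Longrightarrow> 0 \<le> dnf \<Longrightarrow> 0 \<le> sum_list (map (cstp f df dnf) xs)"
  by (induction xs) (auto simp: cstp_def cst_def)

theorem mainTheorem1:
  fixes m \<alpha> :: nat
    and P :: "((nat \<times> nat \<Rightarrow> bool) \<times> (nat \<times> nat \<Rightarrow> bool)) pmf"
    and f df dnf :: real
  assumes "m \<ge> 1"
    and "\<alpha> \<in> {2, 3}"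
    and "quasi_indep ({..<m} \<times> {1..4}) P f df dnf"
  shows "quasi_indep {..<m} (out_pmf \<alpha> P)
           (4 * dnf + 4 * f ^ 2)
           (2 * dnf + 4 * f * df + 4 * f ^ 2 * (2 * dnf + 3 * df))
           (4 * dnf ^ 2 + 8 * f * dnf)"
proof -
  note QI = assms(3)
  have i0: "(0, 1) \<in> {..<m} \<times> {1..4::nat}" using assms(1) by auto
  have "measure_pmf.prob P {(u, v). (\<forall>i\<in>{(0,1)}. \<not> v i \<and> u i) \<and> (\<forall>i\<in>{}. v i) \<and> (\<forall>i\<in>{}. u i)}
      \<le> dnf ^ card {(0::nat,1::nat)} * df ^ card ({}::(nat\<times>nat) set) * f ^ (card ({}::(nat\<times>nat) set) - card ({}::(nat\<times>nat) set))"
    using QI[unfolded quasi_indep_def, rule_format, of "{(0,1)}" "{}" "{}"] i0 by blast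
  then have n1: "0 \<le> dnf" by simp (meson measure_nonneg order_trans)
  have "measure_pmf.prob P {(u, v). (\<forall>i\<in>{}. \<not> v i \<and> u i) \<and> (\<forall>i\<in>{(0,1)}. v i) \<and> (\<forall>i\<in>{}. u i)}
      \<le> dnf ^ card ({}::(nat\<times>nat) set) * df ^ card ({}::(nat\<times>nat) set) * f ^ (card {(0::nat,1::nat)} - card ({}::(nat\<times>nat) set))"
    using QI[unfolded quasi_indep_def, rule_format, of "{}" "{(0,1)}" "{}"] i0 by blast
  then have n2: "0 \<le> f" by simp (meson measure_nonneg order_trans)
  have "measure_pmf.prob P {(u, v). (\<forall>i\<in>{}. \<not> v i \<and> u i) \<and> (\<forall>i\<in>{(0,1)}. v i) \<and> (\<forall>i\<in>{(0,1)}. u i)}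
      \<le> dnf ^ card ({}::(nat\<times>nat) set) * df ^ card {(0::nat,1::nat)} * f ^ (card {(0::nat,1::nat)} - card {(0::nat,1::nat)})"
    using QI[unfolded quasi_indep_def, rule_format, of "{}" "{(0,1)}" "{(0,1)}"] i0 by blast
  then have n3: "0 \<le> df" by simp (meson measure_nonneg order_trans)
  define tJ where "tJ = 4 * dnf ^ 2 + 8 * f * dnf"
  define tK where "tK = 4 * dnf + 4 * f ^ 2"
  define tL where "tL = 2 * dnf + 4 * f * df + 4 * f ^ 2 * (2 * dnf + 3 * df)"
  show ?thesis unfolding quasi_indep_def tJ_def[symmetric] tK_def[symmetric] tL_def[symmetric]
  proof (intro allI impI)
    fix J K L :: "nat set"
    assume H: "J \<subseteq> {..<m} \<and> K \<subseteq> {..<m} \<and> J \<inter> K = {} \<and> L \<subseteq> K"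
    then have HJ: "J \<subseteq> {..<m}" and HK: "K \<subseteq> {..<m}" and HJK: "J \<inter> K = {}" and HL: "L \<subseteq> K" by auto
    define E where "E j = (if j \<in> J then FJ \<alpha> else if j \<in> L then FL \<alpha> else FK \<alpha>)" for j
    define t where "t j = (if j \<in> J then tJ else if j \<in> L then tL else tK)" for j
    define g where "g = (\<lambda>(u :: nat \<times> nat \<Rightarrow> bool, v :: nat \<times> nat \<Rightarrow> bool).
      ((\<lambda>j. blk_U \<alpha> (\<lambda>k. u (j, k)) (\<lambda>k. v (j, k))),
       (\<lambda>j. blk_V \<alpha> (\<lambda>k. u (j, k)) (\<lambda>k. v (j, k)))))"
    define X where "X = {(u :: nat \<Rightarrow> bool, v :: nat \<Rightarrow> bool). (\<forall>i\<in>J. \<not> v i \<and> u i) \<and> (\<forall>i\<in>K. v i) \<and> (\<forall>i\<in>L. u i)}"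
    have fin: "finite (J \<union> K)" using HJ HK finite_subset by (metis finite_lessThan le_sup_iff)
    have sub: "g -` X \<subseteq> evt {} {} {} \<inter> {w. \<forall>j\<in>J \<union> K. \<exists>p\<in>set (E j). w \<in> lev j p}"
    proof
      fix w assume w: "w \<in> g -` X"
      obtain u v where uv: "w = (u, v)" by fastforce
      have "\<exists>p\<in>set (E j). w \<in> lev j p" if j: "j \<in> J \<union> K" for j
      proof -
        have "\<exists>p\<in>set (E j). lhp p (\<lambda>k. u (j, k)) (\<lambda>k. v (j, k))"
        proof (cases "j \<in> J")
          case True
          then have "\<not> blk_V \<alpha> (\<lambda>k. u (j, k)) (\<lambda>k. v (j, k)) \<and> blk_U \<alpha> (\<lambda>k. u (j, k)) (\<lambda>k. v (j, k))"
            using w uv unfolding g_def X_def by auto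
          then show ?thesis using True assms(2) covJ2 covJ3 unfolding E_def by auto
        next
          case nJ: False
          then have jK: "j \<in> K" using j by auto
          show ?thesis
          proof (cases "j \<in> L")
            case True
            then have "blk_V \<alpha> (\<lambda>k. u (j, k)) (\<lambda>k. v (j, k)) \<and> blk_U \<alpha> (\<lambda>k. u (j, k)) (\<lambda>k. v (j, k))"
              using w uv jK unfolding g_def X_def by auto
            then show ?thesis using True nJ assms(2) covL2 covL3 unfolding E_def by auto
          next
            case False
            then have "blk_V \<alpha> (\<lambda>k. u (j, k)) (\<lambda>k. v (j, k))"
              using w uv jK unfolding g_def X_def by auto
            then show ?thesis using False nJ assms(2) covK2 covK3 unfolding E_def by auto
          qed
        qed
        then show ?thesis unfolding uv lev_iff .
      qed
      then show "w \<in> evt {} {} {} \<inter> {w. \<forall>j\<in>J \<union> K. \<exists>p\<in>set (E j). w \<in> lev j p}"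
        unfolding evt_def by auto
    qed
    have "measure_pmf.prob (out_pmf \<alpha> P) X = measure_pmf.prob P (g -` X)"
      unfolding out_pmf_def g_def by simp
    also have "\<dots> \<le> measure_pmf.prob P (evt {} {} {} \<inter> {w. \<forall>j\<in>J \<union> K. \<exists>p\<in>set (E j). w \<in> lev j p})"
      by (rule measure_pmf.finite_measure_mono[OF sub]) simp
    also have "\<dots> \<le> cst f df dnf ({}::(nat\<times>nat) set) {} {} * (\<Prod>j\<in>J \<union> K. sum_list (map (cstp f df dnf) (E j)))"
    proof (rule key[OF QI fin])
      show "J \<union> K \<subseteq> {..<m}" using HJ HK by auto
      show "\<forall>j\<in>J \<union> K. \<forall>p\<in>set (E j). fst p \<subseteq> {1..4} \<and> fst (snd p) \<subseteq> {1..4} \<and> fst p \<inter> fst (snd p) = {} \<and> snd (snd p) \<subseteq> fst (snd p)"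
        using fam_ok[OF assms(2)] unfolding E_def by auto
    qed auto
    also have "\<dots> = (\<Prod>j\<in>J \<union> K. sum_list (map (cstp f df dnf) (E j)))"
      by (simp add: cst_def)
    also have "\<dots> \<le> (\<Prod>j\<in>J \<union> K. t j)"
    proof (rule prod_mono)
      fix j assume "j \<in> J \<union> K"
      show "0 \<le> sum_list (map (cstp f df dnf) (E j)) \<and> sum_list (map (cstp f df dnf) (E j)) \<le> t j"
        using sum_nonneg_fam[OF n2 n3 n1] sumJ[OF assms(2)] sumK[OF assms(2)] sumL[OF assms(2) n2 n3 n1]
        unfolding E_def t_def tJ_def tK_def tL_def by auto
    qed
    also have "\<dots> = tJ ^ card J * tL ^ card L * tK ^ (card K - card L)"
    proof -
      have fJ: "finite J" and fK: "finite K" using fin by auto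
      have fL: "finite L" using HL fK finite_subset by blast
      have u: "J \<union> K = J \<union> (L \<union> (K - L))" using HL by auto
      have "(\<Prod>j\<in>J \<union> K. t j) = (\<Prod>j\<in>J. t j) * ((\<Prod>j\<in>L. t j) * (\<Prod>j\<in>K - L. t j))"
      proof -
        have d1: "J \<inter> (L \<union> (K - L)) = {}" using HL HJK by auto
        have d2: "L \<inter> (K - L) = {}" by auto
        have fKL: "finite (K - L)" using fK by simp
        show ?thesis unfolding u prod.union_disjoint[OF fJ _ d1, OF finite_UnI[OF fL fKL]]
          prod.union_disjoint[OF fL fKL d2] ..
      qed
      also have "\<dots> = (\<Prod>j\<in>J. tJ) * ((\<Prod>j\<in>L. tL) * (\<Prod>j\<in>K - L. tK))"
        using HL HJK unfolding t_def by (intro arg_cong2[where f = "(*)"] prod.cong) auto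
      also have "\<dots> = tJ ^ card J * tL ^ card L * tK ^ (card K - card L)"
        using card_Diff_subset[OF fL HL] by simp
      finally show ?thesis .
    qed
    finally show "measure_pmf.prob (out_pmf \<alpha> P) {(u, v). (\<forall>i\<in>J. \<not> v i \<and> u i) \<and> (\<forall>i\<in>K. v i) \<and> (\<forall>i\<in>L. u i)}
         \<le> tJ ^ card J * tL ^ card L * tK ^ (card K - card L)" unfolding X_def .
  qed
qed

end
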